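(* Suppose Assumption 1 (below), Assumption 5 and Assumption 6(i) hold. Then $\widehat x_1^*-x_1^*=o_p(1)$. Assumption 1: for $t\in\{1,2\}$, $Y_t(x)=g_t(U_t(x))$ where for all $(x,v)\in\mathcal X\times[0,1]$ the conditional law of $U_t(x)$ given $V_t=v$ does not depend on $t$. Assumption 5: one observes two independent samples $(Y_{i1},X_{i1})_{i=1}^n$ and $(Y_{i2},X_{i2})_{i=1}^n$, i.i.d. from the distributions of $(Y_1,X_1)$ and $(Y_2,X_2)$. Assumption 6(i): there is a unique $x_1^*$ with $F_{X_1}(x_1^* )=F_{X_2}(x_1^* )\in(0,1)$, and $F_{X_1}(x_1^* )\in(\underline p,\overline p)$.
   Context: Two periods $t\in\{1,2\}$; potential outcomes $Y_t(x)$, $x\in\mathcal X\subset\mathbb R$; observed real treatment $X_t$ and outcome $Y_t=Y_t(X_t)$; $V_t=F_{X_t}(X_t)$. Fixed constants $0<\underline p<\overline p<1$. $\widehat F_{X_t}$ is the empirical cdf of $(X_{it})_{i}$ and $\widehat F^{-1}_{X_t}$ the empirical quantile function; $\Psi_n(x)=\widehat F_{X_2}(x)-\widehat F_{X_1}(x)$; $\widehat x_1^*$ is the smallest $x\in I_n=[\widehat F^{-1}_{X_1}(\underline p),\widehat F^{-1}_{X_1}(\overline p)]$ such that $|\Psi_n(x)|\le|\Psi_n(x')|$ for all $x'\in I_n$. *)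

theory Defs
  imports "HOL-Probability.Probability"
begin

definition ecdf :: "(nat \<Rightarrow> real) \<Rightarrow> nat \<Rightarrow> real \<Rightarrow> real" where
  "ecdf xs n x = real (card {i. i < n \<and> xs i \<le> x}) / real n"

definition quantile :: "(real \<Rightarrow> real) \<Rightarrow> real \<Rightarrow> real" where
  "quantile F p = Inf {x. p \<le> F x}"

definition xhat :: "(nat \<Rightarrow> real) \<Rightarrow> (nat \<Rightarrow> real) \<Rightarrow> nat \<Rightarrow> real \<Rightarrow> real \<Rightarrow> real" where
  "xhat xs1 xs2 n pl ph =
     (let Psi = (\<lambda>x. ecdf xs2 n x - ecdf xs1 n x);
          I = {quantile (ecdf xs1 n) pl .. quantile (ecdf xs1 n) ph}
      in (LEAST x. x \<in> I \<and> (\<forall>x'\<in>I. \<bar>Psi x\<bar> \<le> \<bar>Psi x'\<bar>)))"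

end

theory Submission
  imports Defs
begin



lemma ecdf_sum: "ecdf xs n p = (\<Sum>i<n. indicator {..p} (xs i)) / real n"
proof -
  have "(\<Sum>i<n. indicator {..p} (xs i) :: real) = real (card ({..<n} \<inter> {i. xs i \<le> p}))"
    by (simp add: indicator_def sum.If_cases)
  also have "{..<n} \<inter> {i. xs i \<le> p} = {i. i < n \<and> xs i \<le> p}" by auto
  finally show ?thesis unfolding ecdf_def by simp
qed

lemma hoeff_ecdf:
  fixes XS :: "nat \<Rightarrow> nat \<Rightarrow> 'o \<Rightarrow> real" and YS :: "nat \<Rightarrow> nat \<Rightarrow> 'o \<Rightarrow> real"
  assumes M: "prob_space M"
    and ind: "prob_space.indep_vars M (\<lambda>_. borel \<Otimes>\<^sub>M borel)
                     (\<lambda>(t,i) \<omega>. (YS t i \<omega>, XS t i \<omega>)) ({1,2} \<times> UNIV)"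
    and t: "t \<in> {1,2}"
    and law: "\<And>i. distr M borel (XS t i) = D"
    and n: "n > 0" and eta: "\<eta> \<ge> 0"
  shows "measure M {\<omega>\<in>space M. \<eta> \<le> \<bar>ecdf (\<lambda>i. XS t i \<omega>) n p - cdf D p\<bar>} \<le> 2 * exp (-2 * real n * \<eta>\<^sup>2)"
proof -
  interpret prob_space M by fact
  define Z where "Z = (\<lambda>(s::nat,i::nat) \<omega>. indicator {..p} (XS s i \<omega>) :: real)"
  have ind2: "indep_vars (\<lambda>_. borel) (\<lambda>k \<omega>. (\<lambda>(y::real,x::real). indicator {..p} x :: real) ((\<lambda>(t,i) \<omega>. (YS t i \<omega>, XS t i \<omega>)) k \<omega>)) ({1,2} \<times> UNIV)"
    by (rule indep_vars_compose2[OF ind]) auto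
  have ind3: "indep_vars (\<lambda>_. borel) Z ({t} \<times> {..<n})"
  proof -
    have "{t} \<times> {..<n} \<subseteq> {1,2} \<times> UNIV" using t by auto
    from indep_vars_subset[OF ind2 this] show ?thesis by (simp add: Z_def split_def)
  qed
  have rvXS: "random_variable borel (XS t i)" for i
  proof -
    have "random_variable (borel \<Otimes>\<^sub>M borel) (\<lambda>\<omega>. (YS t i \<omega>, XS t i \<omega>))"
      using ind t unfolding indep_vars_def by auto
    from measurable_snd'[OF this] show ?thesis by simp
  qed
  have rvZ: "random_variable borel (Z (t,i))" for i
    unfolding Z_def using rvXS[of i] by simp
  interpret H: Hoeffding_ineq_iid M "{t} \<times> {..<n}" Z "Z (t,0)" 0 1 "expectation (Z (t,0))"
  proof unfold_locales
    show "finite ({t} \<times> {..<n})" by simp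
    show "indep_vars (\<lambda>_. borel) Z ({t} \<times> {..<n})" by (rule ind3)
    fix i assume "i \<in> {t} \<times> {..<n}"
    then obtain j where i: "i = (t,j)" by auto
    have "distr M borel (Z (t,j)) = distr (distr M borel (XS t j)) borel (indicator {..p})"
      unfolding Z_def using rvXS[of j] by (subst distr_distr) (auto simp: comp_def)
    also have "\<dots> = distr (distr M borel (XS t 0)) borel (indicator {..p})" by (simp add: law)
    also have "\<dots> = distr M borel (Z (t,0))"
      unfolding Z_def using rvXS[of 0] by (subst distr_distr) (auto simp: comp_def)
    finally show "distr M borel (Z i) = distr M borel (Z (t, 0))" using i by simp
  next
    show "random_variable borel (Z (t,0))" by (rule rvZ)
    show "AE x in M. Z (t, 0) x \<in> {0..1}" by (auto simp: Z_def)
  qed simp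
  have E: "expectation (Z (t,0)) = cdf D p"
  proof -
    have "expectation (Z (t,0)) = measure M (XS t 0 -` {..p} \<inter> space M)"
      unfolding Z_def using rvXS[of 0]
      by (simp add: indicator_vimage[symmetric] del: indicator_vimage)
    also have "\<dots> = measure (distr M borel (XS t 0)) {..p}"
      using rvXS[of 0] by (simp add: measure_distr)
    finally show ?thesis by (simp add: law cdf_def)
  qed
  have "measure M {\<omega>\<in>space M. \<bar>(\<Sum>i\<in>{t} \<times> {..<n}. Z i \<omega>) / real (card ({t} \<times> {..<n})) - expectation (Z (t,0))\<bar> \<ge> \<eta>}
     \<le> 2 * exp (-2 * real (card ({t} \<times> {..<n})) * \<eta>\<^sup>2 / (1 - 0)\<^sup>2)"
    by (rule H.Hoeffding_ineq_abs_ge') (use eta n in auto)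
  moreover have "(\<Sum>i\<in>{t} \<times> {..<n}. Z i \<omega>) = (\<Sum>i<n. indicator {..p} (XS t i \<omega>))" for \<omega>
  proof -
    have "(\<Sum>i\<in>{t} \<times> {..<n}. Z i \<omega>) = (\<Sum>x\<in>{t}. \<Sum>y<n. Z (x,y) \<omega>)"
      by (simp add: sum.cartesian_product split_def)
    thus ?thesis by (simp add: Z_def)
  qed
  ultimately show ?thesis using E by (simp add: ecdf_sum card_cartesian_product)
qed




lemma grid:
  fixes F :: "real \<Rightarrow> real"
  assumes cont: "continuous_on UNIV F" and mono: "mono F"
    and bnd: "\<And>x. 0 \<le> F x \<and> F x \<le> 1"
    and bot: "(F \<longlongrightarrow> 0) at_bot" and top: "(F \<longlongrightarrow> 1) at_top" and eta: "\<eta> > 0"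
  shows "\<exists>P. finite P \<and> (\<forall>G. mono G \<longrightarrow> (\<forall>x. 0 \<le> G x \<and> G x \<le> 1) \<longrightarrow>
            (\<forall>p\<in>P. \<bar>G p - F p\<bar> \<le> \<eta>) \<longrightarrow> (\<forall>x. \<bar>G x - F x\<bar> \<le> 2*\<eta>))"
proof -
  have "eventually (\<lambda>x. F x < \<eta>) at_bot" using order_tendstoD(2)[OF bot eta] .
  then obtain a where a: "F a < \<eta>" unfolding eventually_at_bot_linorder by auto
  have "eventually (\<lambda>x. F x > 1 - \<eta>) at_top" using order_tendstoD(1)[OF top] eta by simp
  then obtain b0 where b0: "F b0 > 1 - \<eta>" unfolding eventually_at_top_linorder by auto
  define b where "b = max a b0"
  have ab: "a \<le> b" and b: "F b > 1 - \<eta>"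
    using b0 mono[unfolded mono_def, rule_format, of b0 b] by (auto simp: b_def)
  have uc: "uniformly_continuous_on {a..b} F"
    by (rule compact_uniformly_continuous[OF continuous_on_subset[OF cont] compact_Icc]) auto
  then obtain d where d: "d > 0" and dd: "\<And>x y. x \<in> {a..b} \<Longrightarrow> y \<in> {a..b} \<Longrightarrow> dist y x < d \<Longrightarrow> dist (F y) (F x) < \<eta>"
    unfolding uniformly_continuous_on_def using eta by metis
  obtain m :: nat where m: "(b - a) / d < real m" using reals_Archimedean2 by blast
  define N where "N = Suc m"
  have N: "(b - a) / d < real N" "N > 0" using m by (auto simp: N_def)
  define h where "h = (b - a) / real N"
  have hd: "h < d" using N d unfolding h_def by (simp add: field_simps)
  have h0: "h \<ge> 0" using ab N unfolding h_def by simp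
  define P where "P = (\<lambda>k. a + real k * h) ` {..N}"
  have aP: "a \<in> P" unfolding P_def by force
  have bN: "a + real N * h = b" using N unfolding h_def by simp
  have bP: "b \<in> P" unfolding P_def using bN by (metis atMost_iff image_eqI order_refl)
  show ?thesis
  proof (intro exI[of _ P] conjI allI impI)
    show "finite P" unfolding P_def by simp
    fix G :: "real \<Rightarrow> real" and x :: real
    assume Gm: "mono G" and Gb: "\<forall>x. 0 \<le> G x \<and> G x \<le> 1" and GP: "\<forall>p\<in>P. \<bar>G p - F p\<bar> \<le> \<eta>"
    have Ga: "\<bar>G a - F a\<bar> \<le> \<eta>" and Gbb: "\<bar>G b - F b\<bar> \<le> \<eta>" using GP aP bP by auto
    consider "x < a" | "b \<le> x" | "a \<le> x \<and> x < b" by linarith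
    then show "\<bar>G x - F x\<bar> \<le> 2 * \<eta>"
    proof cases
      case 1
      have "G x \<le> G a" "F x \<le> F a" using 1 Gm mono by (auto simp: mono_def)
      then show ?thesis using Ga a bnd[of x] Gb[rule_format, of x] unfolding abs_le_iff by linarith
    next
      case 2
      have "G b \<le> G x" "F b \<le> F x" using 2 Gm mono by (auto simp: mono_def)
      then show ?thesis using Gbb b bnd[of x] Gb[rule_format, of x] unfolding abs_le_iff by linarith
    next
      case 3
      have hp: "h > 0" using 3 N unfolding h_def by simp
      define k where "k = nat \<lfloor>(x - a) / h\<rfloor>"
      have q0: "(x - a) / h \<ge> 0" using 3 hp by simp
      have k1: "real k \<le> (x - a) / h" unfolding k_def using q0 by linarith
      have k2: "(x - a) / h < real k + 1" unfolding k_def using q0 by linarith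
      have "(x - a) / h < (b - a) / h" using 3 hp by (simp add: divide_strict_right_mono)
      also have "(b - a) / h = real N" using N hp unfolding h_def by (simp add: field_simps)
      finally have kN: "k < N" using k1 by linarith
      define p where "p = a + real k * h"
      define q where "q = a + real (Suc k) * h"
      have px: "p \<le> x" using k1 hp unfolding p_def by (simp add: field_simps)
      have xq: "x \<le> q" using k2 hp unfolding q_def by (simp add: field_simps)
      have pP: "p \<in> P" unfolding P_def p_def using kN by auto
      have qP: "q \<in> P" unfolding P_def q_def using kN by (intro imageI) auto
      have pab: "p \<in> {a..b}" using px 3 hp unfolding p_def by auto
      have qle: "q \<le> b"
      proof -
        have "real (Suc k) * h \<le> real N * h" using kN hp by (intro mult_right_mono) auto
        thus ?thesis using bN unfolding q_def by linarith
      qed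
      have qab: "q \<in> {a..b}" using xq 3 qle by auto
      have "dist q p < d" using hd hp unfolding p_def q_def dist_real_def by (simp add: algebra_simps)
      from dd[OF pab qab this] have Fpq: "\<bar>F q - F p\<bar> < \<eta>" by (simp add: dist_real_def)
      have "G p \<le> G x" "G x \<le> G q" "F p \<le> F x" "F x \<le> F q"
        using px xq Gm mono by (auto simp: mono_def)
      moreover have "\<bar>G p - F p\<bar> \<le> \<eta>" "\<bar>G q - F q\<bar> \<le> \<eta>" using GP pP qP by auto
      ultimately show ?thesis using Fpq unfolding abs_le_iff abs_less_iff by linarith
    qed
  qed
qed




lemma ecdf_mono: "mono (ecdf xs n)"
  unfolding mono_def ecdf_def
  by (auto intro!: divide_right_mono card_mono)

lemma ecdf_bnd: "0 \<le> ecdf xs n x \<and> ecdf xs n x \<le> 1"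
proof -
  have "card {i. i < n \<and> xs i \<le> x} \<le> card {..<n}" by (rule card_mono) auto
  thus ?thesis unfolding ecdf_def by (cases "n = 0") (auto simp: field_simps)
qed

lemma ecdf_vals: "ecdf xs n x \<in> (\<lambda>k. real k / real n) ` {..n}"
proof -
  have "card {i. i < n \<and> xs i \<le> x} \<le> card {..<n}" by (rule card_mono) auto
  thus ?thesis unfolding ecdf_def by auto
qed

lemma ecdf_right: "\<exists>d>0. \<forall>y. s \<le> y \<longrightarrow> y < s + d \<longrightarrow> ecdf xs n y = ecdf xs n s"
proof -
  define S where "S = (\<lambda>i. xs i - s) ` {i. i < n \<and> xs i > s}"
  have fS: "finite S" unfolding S_def by simp
  define d where "d = (if S = {} then 1 else Min S)"
  have Sp: "\<forall>u\<in>S. u > 0" unfolding S_def by auto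
  have d0: "d > 0" unfolding d_def using fS Sp by auto
  have dle: "\<And>u. u \<in> S \<Longrightarrow> d \<le> u" unfolding d_def using fS by auto
  show ?thesis
  proof (intro exI[of _ d] conjI allI impI d0)
    fix y assume y: "s \<le> y" "y < s + d"
    have "{i. i < n \<and> xs i \<le> y} = {i. i < n \<and> xs i \<le> s}"
    proof (intro Collect_cong iffI conjI)
      fix i assume i: "i < n \<and> xs i \<le> y"
      show "xs i \<le> s"
      proof (rule ccontr)
        assume "\<not> xs i \<le> s"
        hence "xs i - s \<in> S" unfolding S_def using i by auto
        from dle[OF this] y i show False by linarith
      qed
    qed (use y in auto)
    thus "ecdf xs n y = ecdf xs n s" unfolding ecdf_def by simp
  qed
qed

lemma ecdf_one: "n > 0 \<Longrightarrow> \<exists>b. ecdf xs n b = 1"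
proof -
  assume n: "n > 0"
  define b where "b = Max (xs ` {..<n})"
  have "{i. i < n \<and> xs i \<le> b} = {..<n}" unfolding b_def by auto
  thus ?thesis using n unfolding ecdf_def by (intro exI[of _ b]) simp
qed

lemma ecdf_lowb: "n > 0 \<Longrightarrow> \<exists>a. \<forall>x. 0 < ecdf xs n x \<longrightarrow> a \<le> x"
proof -
  assume n: "n > 0"
  define a where "a = Min (xs ` {..<n})"
  show ?thesis
  proof (intro exI[of _ a] allI impI)
    fix x assume "0 < ecdf xs n x"
    hence "{i. i < n \<and> xs i \<le> x} \<noteq> {}" unfolding ecdf_def by (auto simp del: Collect_empty_eq)
    then obtain i where "i < n" "xs i \<le> x" by auto
    moreover have "a \<le> xs i" unfolding a_def using \<open>i < n\<close> by auto
    ultimately show "a \<le> x" by linarith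
  qed
qed

lemma quant_facts:
  assumes n: "n > 0" and p: "0 < p" "p \<le> 1"
  shows "\<And>x. p \<le> ecdf xs n x \<Longrightarrow> quantile (ecdf xs n) p \<le> x"
    and "p \<le> ecdf xs n (quantile (ecdf xs n) p)"
proof -
  define S where "S = {x. p \<le> ecdf xs n x}"
  obtain b where b: "ecdf xs n b = 1" using ecdf_one[OF n] by blast
  have bS: "b \<in> S" using b p unfolding S_def by simp
  hence Sne: "S \<noteq> {}" by blast
  obtain a where a: "\<And>x. 0 < ecdf xs n x \<Longrightarrow> a \<le> x" using ecdf_lowb[OF n] by blast
  have bdd: "bdd_below S"
  proof (rule bdd_belowI[of _ a])
    fix x assume "x \<in> S"
    hence "0 < ecdf xs n x" using p by (simp add: S_def)
    thus "a \<le> x" by (rule a)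
  qed
  have q: "quantile (ecdf xs n) p = Inf S" unfolding quantile_def S_def ..
  show low: "quantile (ecdf xs n) p \<le> x" if "p \<le> ecdf xs n x" for x
  proof -
    have "x \<in> S" using that by (simp add: S_def)
    thus ?thesis unfolding q by (rule cInf_lower[OF _ bdd])
  qed
  from ecdf_right[of "Inf S" xs n] obtain d where d: "d > 0"
    "\<forall>y. Inf S \<le> y \<longrightarrow> y < Inf S + d \<longrightarrow> ecdf xs n y = ecdf xs n (Inf S)" by blast
  have "\<exists>x\<in>S. x < Inf S + d" by (rule cInf_less_iff[OF Sne bdd, THEN iffD1]) (use d(1) in simp)
  then obtain x where x: "x \<in> S" "x < Inf S + d" by blast
  have "Inf S \<le> x" using x(1) by (rule cInf_lower[OF _ bdd])
  with d(2) x(2) have "ecdf xs n x = ecdf xs n (Inf S)" by blast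
  with x(1) show "p \<le> ecdf xs n (quantile (ecdf xs n) p)" unfolding q by (simp add: S_def)
qed




lemma main_det:
  fixes F1 F2 :: "real \<Rightarrow> real" and xs1 xs2 :: "nat \<Rightarrow> real"
  assumes n: "n > 0" and cont1: "continuous_on UNIV F1" and mono1: "mono F1"
    and close1: "\<And>x. \<bar>ecdf xs1 n x - F1 x\<bar> \<le> \<eta>"
    and close2: "\<And>x. \<bar>ecdf xs2 n x - F2 x\<bar> \<le> \<eta>"
    and e1: "\<eta> < F1 z - pl" and e2: "\<eta> < ph - F1 z" and cross: "F1 z = F2 z"
    and p: "0 < pl" "pl < ph" "ph < 1"
    and sep: "\<And>x. pl - \<eta> \<le> F1 x \<Longrightarrow> F1 x \<le> ph + \<eta> \<Longrightarrow> \<epsilon> \<le> \<bar>x - z\<bar> \<Longrightarrow> 4*\<eta> < \<bar>F2 x - F1 x\<bar>"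
  shows "\<bar>xhat xs1 xs2 n pl ph - z\<bar> < \<epsilon>"
proof -
  define G1 where "G1 = ecdf xs1 n"
  define G2 where "G2 = ecdf xs2 n"
  define Psi where "Psi = (\<lambda>x. G2 x - G1 x)"
  define q1 where "q1 = quantile G1 pl"
  define q2 where "q2 = quantile G1 ph"
  define I where "I = {q1..q2}"
  have Q1a: "\<And>x. pl \<le> G1 x \<Longrightarrow> q1 \<le> x" and Q1b: "pl \<le> G1 q1"
    using quant_facts[OF n, of pl xs1] p unfolding G1_def q1_def by auto
  have Q2a: "\<And>x. ph \<le> G1 x \<Longrightarrow> q2 \<le> x" and Q2b: "ph \<le> G1 q2"
    using quant_facts[OF n, of ph xs1] p unfolding G1_def q2_def by auto
  have G1m: "mono G1" unfolding G1_def by (rule ecdf_mono)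
  have c1: "\<bar>G1 x - F1 x\<bar> \<le> \<eta>" for x using close1 unfolding G1_def by simp
  have c2: "\<bar>G2 x - F2 x\<bar> \<le> \<eta>" for x using close2 unfolding G2_def by simp
  have zI: "z \<in> I"
  proof -
    have "pl \<le> G1 z" using c1[of z] e1 by (simp add: abs_le_iff)
    hence "q1 \<le> z" by (rule Q1a)
    moreover have "z \<le> q2"
    proof (rule ccontr)
      assume "\<not> z \<le> q2"
      hence "F1 q2 \<le> F1 z" using mono1 by (auto simp: mono_def)
      with c1[of q2] Q2b e2 show False by (simp add: abs_le_iff)
    qed
    ultimately show ?thesis unfolding I_def by simp
  qed
  define V where "V = (\<lambda>x. \<bar>Psi x\<bar>) ` I"
  have "V \<subseteq> (\<lambda>(j,k). \<bar>real j / real n - real k / real n\<bar>) ` ({..n} \<times> {..n})"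
  proof
    fix v assume "v \<in> V"
    then obtain x where x: "v = \<bar>Psi x\<bar>" unfolding V_def by auto
    obtain j where j: "j \<le> n" "G2 x = real j / real n" using ecdf_vals[of xs2 n x] unfolding G2_def by auto
    obtain k where k: "k \<le> n" "G1 x = real k / real n" using ecdf_vals[of xs1 n x] unfolding G1_def by auto
    show "v \<in> (\<lambda>(j,k). \<bar>real j / real n - real k / real n\<bar>) ` ({..n} \<times> {..n})"
      using j k x unfolding Psi_def by (intro image_eqI[of _ _ "(j,k)"]) auto
  qed
  hence fV: "finite V" by (rule finite_subset) simp
  have Vne: "V \<noteq> {}" using zI unfolding V_def by auto
  define m where "m = Min V"
  have mle: "\<And>x. x \<in> I \<Longrightarrow> m \<le> \<bar>Psi x\<bar>" unfolding m_def V_def using fV V_def by auto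
  have "m \<in> V" unfolding m_def using fV Vne by simp
  define S where "S = {x\<in>I. \<bar>Psi x\<bar> = m}"
  have Sne: "S \<noteq> {}" using \<open>m \<in> V\<close> unfolding S_def V_def by auto
  have bdd: "bdd_below S" unfolding S_def I_def bdd_below_def by auto
  define s where "s = Inf S"
  have sle: "\<And>y. y \<in> S \<Longrightarrow> s \<le> y" unfolding s_def using bdd by (intro cInf_lower)
  have sI: "s \<in> I"
  proof -
    have "q1 \<le> s" unfolding s_def using Sne by (intro cInf_greatest) (auto simp: S_def I_def)
    moreover obtain y where "y \<in> S" using Sne by auto
    hence "s \<le> q2" using sle[of y] unfolding S_def I_def by auto
    ultimately show ?thesis unfolding I_def by simp
  qed
  obtain d1 where d1: "d1 > 0" "\<And>y. s \<le> y \<Longrightarrow> y < s + d1 \<Longrightarrow> G1 y = G1 s"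
    using ecdf_right[of s xs1 n] unfolding G1_def by blast
  obtain d2 where d2: "d2 > 0" "\<And>y. s \<le> y \<Longrightarrow> y < s + d2 \<Longrightarrow> G2 y = G2 s"
    using ecdf_right[of s xs2 n] unfolding G2_def by blast
  have "\<exists>y\<in>S. y < s + min d1 d2" unfolding s_def
    by (rule cInf_less_iff[OF Sne bdd, THEN iffD1]) (use d1(1) d2(1) in simp)
  then obtain y where y: "y \<in> S" "y < s + min d1 d2" by blast
  have ys: "s \<le> y" by (rule sle[OF y(1)])
  have "G1 y = G1 s" using d1(2)[OF ys] y(2) by simp
  moreover have "G2 y = G2 s" using d2(2)[OF ys] y(2) by simp
  ultimately have "Psi y = Psi s" unfolding Psi_def by simp
  hence sS: "s \<in> S" using y sI unfolding S_def by auto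
  have P_iff: "(x \<in> I \<and> (\<forall>x'\<in>I. \<bar>Psi x\<bar> \<le> \<bar>Psi x'\<bar>)) \<longleftrightarrow> x \<in> S" for x
  proof
    assume A: "x \<in> I \<and> (\<forall>x'\<in>I. \<bar>Psi x\<bar> \<le> \<bar>Psi x'\<bar>)"
    obtain x0 where x0: "x0 \<in> S" using Sne by auto
    hence "x0 \<in> I" "\<bar>Psi x0\<bar> = m" unfolding S_def by auto
    hence "\<bar>Psi x\<bar> \<le> m" using A by metis
    moreover have "m \<le> \<bar>Psi x\<bar>" using A mle by blast
    ultimately show "x \<in> S" using A unfolding S_def by simp
  next
    assume "x \<in> S" thus "x \<in> I \<and> (\<forall>x'\<in>I. \<bar>Psi x\<bar> \<le> \<bar>Psi x'\<bar>)" using mle unfolding S_def by auto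
  qed
  have xh: "xhat xs1 xs2 n pl ph = s"
  proof -
    have "xhat xs1 xs2 n pl ph = (LEAST x. x \<in> I \<and> (\<forall>x'\<in>I. \<bar>Psi x\<bar> \<le> \<bar>Psi x'\<bar>))"
      unfolding xhat_def Let_def Psi_def G1_def G2_def I_def q1_def q2_def by simp
    also have "\<dots> = s" using sS sle by (intro Least_equality) (auto simp: P_iff)
    finally show ?thesis .
  qed
  have smin: "\<bar>Psi s\<bar> \<le> \<bar>Psi z\<bar>" using sS zI P_iff by blast
  have F1lo: "pl - \<eta> \<le> F1 s"
  proof -
    have "q1 \<le> s" using sI unfolding I_def by simp
    hence "G1 q1 \<le> G1 s" using G1m by (auto simp: mono_def)
    thus ?thesis using Q1b c1[of s] by (simp add: abs_le_iff)
  qed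
  have F1hi: "F1 s \<le> ph + \<eta>"
  proof (rule ccontr)
    assume A: "\<not> F1 s \<le> ph + \<eta>"
    have "isCont F1 s" using cont1 by (simp add: continuous_on_eq_continuous_at)
    then obtain r where r: "r > 0" "\<And>y. dist y s < r \<Longrightarrow> dist (F1 y) (F1 s) < F1 s - (ph + \<eta>)"
      using A unfolding continuous_at_eps_delta by (metis diff_gt_0_iff_gt not_le)
    define y where "y = s - r/2"
    have "dist y s < r" using r unfolding y_def dist_real_def by simp
    hence "\<bar>F1 y - F1 s\<bar> < F1 s - (ph + \<eta>)" using r(2) unfolding dist_real_def by blast
    hence Fy: "F1 y > ph + \<eta>" unfolding abs_less_iff by linarith
    have "y < q2" using sI r unfolding I_def y_def by simp
    hence "G1 y < ph" using Q2a[of y] by linarith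
    thus False using c1[of y] Fy by (simp add: abs_le_iff)
  qed
  have "\<bar>F2 s - F1 s\<bar> \<le> 4 * \<eta>"
    using c1[of s] c2[of s] c1[of z] c2[of z] smin cross unfolding Psi_def abs_le_iff by linarith
  thus ?thesis using sep[OF F1lo F1hi] xh by force
qed




lemma sep_const:
  fixes F1 F2 :: "real \<Rightarrow> real"
  assumes c1: "continuous_on UNIV F1" and c2: "continuous_on UNIV F2" and m1: "mono F1"
    and bot: "(F1 \<longlongrightarrow> 0) at_bot" and top: "(F1 \<longlongrightarrow> 1) at_top"
    and lo: "0 < lo" and hi: "hi < 1" and eps: "\<epsilon> > 0"
    and uniq: "\<And>x. F1 x = F2 x \<Longrightarrow> F1 x \<in> {0<..<1} \<Longrightarrow> x = z"
  shows "\<exists>m>0. \<forall>x. lo \<le> F1 x \<longrightarrow> F1 x \<le> hi \<longrightarrow> \<epsilon> \<le> \<bar>x - z\<bar> \<longrightarrow> m \<le> \<bar>F2 x - F1 x\<bar>"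
proof -
  have "eventually (\<lambda>x. F1 x < lo) at_bot" using order_tendstoD(2)[OF bot lo] .
  then obtain a where a: "\<And>x. x \<le> a \<Longrightarrow> F1 x < lo" unfolding eventually_at_bot_linorder by auto
  have "eventually (\<lambda>x. F1 x > hi) at_top" using order_tendstoD(1)[OF top hi] .
  then obtain b where b: "\<And>x. x \<ge> b \<Longrightarrow> F1 x > hi" unfolding eventually_at_top_linorder by auto
  define K where "K = {a..b} \<inter> {x. lo \<le> F1 x \<and> F1 x \<le> hi \<and> \<epsilon> \<le> \<bar>x - z\<bar>}"
  have inK: "x \<in> K" if "lo \<le> F1 x" "F1 x \<le> hi" "\<epsilon> \<le> \<bar>x - z\<bar>" for x
  proof -
    have "a \<le> x" using a[of x] that by (cases "x \<le> a") auto
    moreover have "x \<le> b" using b[of x] that by (cases "x \<ge> b") auto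
    ultimately show ?thesis using that unfolding K_def by auto
  qed
  show ?thesis
  proof (cases "K = {}")
    case True
    show ?thesis
    proof (intro exI[of _ "1::real"] conjI allI impI)
      fix x assume "lo \<le> F1 x" "F1 x \<le> hi" "\<epsilon> \<le> \<bar>x - z\<bar>"
      from inK[OF this] True show "1 \<le> \<bar>F2 x - F1 x\<bar>" by simp
    qed simp
  next
    case False
    have cl: "closed {x. lo \<le> F1 x \<and> F1 x \<le> hi \<and> \<epsilon> \<le> \<bar>x - z\<bar>}"
      by (intro closed_Collect_conj closed_Collect_le c1 continuous_intros)
    have "compact K" unfolding K_def by (rule compact_Int_closed[OF compact_Icc cl])
    moreover have "continuous_on K (\<lambda>x. \<bar>F2 x - F1 x\<bar>)"
      by (intro continuous_intros continuous_on_subset[OF c1] continuous_on_subset[OF c2]) auto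
    ultimately obtain k where k: "k \<in> K" "\<And>y. y \<in> K \<Longrightarrow> \<bar>F2 k - F1 k\<bar> \<le> \<bar>F2 y - F1 y\<bar>"
      using continuous_attains_inf[OF _ False] by blast
    have kp: "\<bar>F2 k - F1 k\<bar> > 0"
    proof (rule ccontr)
      assume "\<not> ?thesis"
      hence "F1 k = F2 k" by simp
      moreover have "F1 k \<in> {0<..<1}" using k(1) lo hi unfolding K_def by auto
      ultimately have "k = z" by (rule uniq)
      moreover have "\<epsilon> \<le> \<bar>k - z\<bar>" using k(1) unfolding K_def by auto
      ultimately show False using eps by simp
    qed
    show ?thesis using kp k inK by (intro exI[of _ "\<bar>F2 k - F1 k\<bar>"]) blast
  qed
qed




theorem lemma1:
  fixes M0 :: "'w measure" and M :: "'o measure" and SU :: "'u measure"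
    and XX :: "real set"
    and X :: "nat \<Rightarrow> 'w \<Rightarrow> real" and U :: "nat \<Rightarrow> real \<Rightarrow> 'w \<Rightarrow> 'u"
    and g :: "nat \<Rightarrow> 'u \<Rightarrow> real" and Y :: "nat \<Rightarrow> 'w \<Rightarrow> real"
    and XS :: "nat \<Rightarrow> nat \<Rightarrow> 'o \<Rightarrow> real" and YS :: "nat \<Rightarrow> nat \<Rightarrow> 'o \<Rightarrow> real"
    and pl ph xstar :: real
  assumes p_bounds: "0 < pl" "pl < ph" "ph < 1"
    \<comment> \<open>population model\<close>
    and M0: "prob_space M0"
    and X_meas: "\<And>t. t \<in> {1,2} \<Longrightarrow> X t \<in> borel_measurable M0"
    and X_in: "\<And>t \<omega>. t \<in> {1,2} \<Longrightarrow> \<omega> \<in> space M0 \<Longrightarrow> X t \<omega> \<in> XX"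
    and X_cont: "\<And>t. t \<in> {1,2} \<Longrightarrow> continuous_on UNIV (cdf (distr M0 borel (X t)))"
    and U_meas: "\<And>t x. t \<in> {1,2} \<Longrightarrow> x \<in> XX \<Longrightarrow> U t x \<in> measurable M0 SU"
    and g_meas: "\<And>t. t \<in> {1,2} \<Longrightarrow> g t \<in> measurable SU borel"
    and Y_def: "\<And>t \<omega>. t \<in> {1,2} \<Longrightarrow> \<omega> \<in> space M0 \<Longrightarrow> Y t \<omega> = g t (U t (X t \<omega>) \<omega>)"
    and Y_meas: "\<And>t. t \<in> {1,2} \<Longrightarrow> Y t \<in> borel_measurable M0"
    \<comment> \<open>Assumption 1: common (regular) conditional law of U_t(x) given V_t = v\<close>
    and A1: "\<exists>K :: real \<Rightarrow> real \<Rightarrow> 'u measure.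
        (\<forall>x\<in>XX. \<forall>v\<in>{0..1}. prob_space (K x v) \<and> sets (K x v) = sets SU) \<and>
        (\<forall>x\<in>XX. \<forall>B\<in>sets SU. (\<lambda>v. measure (K x v) B) \<in> borel_measurable borel) \<and>
        (\<forall>t\<in>{1,2}. \<forall>x\<in>XX. \<forall>A\<in>sets borel. \<forall>B\<in>sets SU.
           measure M0 {\<omega>\<in>space M0. cdf (distr M0 borel (X t)) (X t \<omega>) \<in> A \<and> U t x \<omega> \<in> B}
           = (\<integral>v. indicator A v * measure (K x v) B
                \<partial>(distr M0 borel (\<lambda>\<omega>. cdf (distr M0 borel (X t)) (X t \<omega>)))))"
    \<comment> \<open>Assumption 5: two independent i.i.d. samples\<close>
    and M: "prob_space M"
    and A5_indep: "prob_space.indep_vars M (\<lambda>_. borel \<Otimes>\<^sub>M borel)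
                     (\<lambda>(t,i) \<omega>. (YS t i \<omega>, XS t i \<omega>)) ({1,2} \<times> UNIV)"
    and A5_law: "\<And>t i. t \<in> {1,2} \<Longrightarrow>
        distr M (borel \<Otimes>\<^sub>M borel) (\<lambda>\<omega>. (YS t i \<omega>, XS t i \<omega>))
        = distr M0 (borel \<Otimes>\<^sub>M borel) (\<lambda>\<omega>. (Y t \<omega>, X t \<omega>))"
    \<comment> \<open>Assumption 6(i)\<close>
    and A6_cross: "cdf (distr M0 borel (X 1)) xstar = cdf (distr M0 borel (X 2)) xstar"
    and A6_in01: "cdf (distr M0 borel (X 1)) xstar \<in> {0<..<1}"
    and A6_unique: "\<And>x. cdf (distr M0 borel (X 1)) x = cdf (distr M0 borel (X 2)) x \<Longrightarrow>
                     cdf (distr M0 borel (X 1)) x \<in> {0<..<1} \<Longrightarrow> x = xstar"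
    and A6_p: "cdf (distr M0 borel (X 1)) xstar \<in> {pl<..<ph}"
  shows "\<forall>\<epsilon>>0. \<forall>\<delta>>0. \<exists>N. \<forall>n\<ge>N. \<exists>A\<in>sets M.
           {\<omega>\<in>space M. \<epsilon> < \<bar>xhat (\<lambda>i. XS 1 i \<omega>) (\<lambda>i. XS 2 i \<omega>) n pl ph - xstar\<bar>} \<subseteq> A
           \<and> measure M A < \<delta>"
proof (intro allI impI)
  fix \<epsilon> \<delta> :: real assume eps: "\<epsilon> > 0" and del: "\<delta> > 0"
  interpret M0: prob_space M0 by (rule M0)
  interpret PM: prob_space M by (rule M)
  define F where "F t = cdf (distr M0 borel (X t))" for t
  have RD: "real_distribution (distr M0 borel (X t))" if "t \<in> {1,2}" for t
    using X_meas[OF that] by simp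
  have Fmono: "mono (F t)" if "t \<in> {1,2}" for t
    unfolding mono_def F_def using finite_borel_measure.cdf_nondecreasing[OF real_distribution.finite_borel_measure_M[OF RD[OF that]]] by blast
  have Fbnd: "0 \<le> F t x \<and> F t x \<le> 1" if "t \<in> {1,2}" for t x
    unfolding F_def using finite_borel_measure.cdf_nonneg[OF real_distribution.finite_borel_measure_M[OF RD[OF that]]]
      real_distribution.cdf_bounded_prob[OF RD[OF that]] by blast
  have Fbot: "(F t \<longlongrightarrow> 0) at_bot" if "t \<in> {1,2}" for t
    unfolding F_def using finite_borel_measure.cdf_lim_at_bot[OF real_distribution.finite_borel_measure_M[OF RD[OF that]]] .
  have Ftop: "(F t \<longlongrightarrow> 1) at_top" if "t \<in> {1,2}" for t
    unfolding F_def using real_distribution.cdf_lim_at_top_prob[OF RD[OF that]] .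
  have Fcont: "continuous_on UNIV (F t)" if "t \<in> {1,2}" for t
    unfolding F_def using X_cont[OF that] .
  have rvP: "(\<lambda>\<omega>. (YS t i \<omega>, XS t i \<omega>)) \<in> measurable M (borel \<Otimes>\<^sub>M borel)" if "t \<in> {1,2}" for t i
    using A5_indep that unfolding PM.indep_vars_def by auto
  have rvXS: "XS t i \<in> borel_measurable M" if "t \<in> {1,2}" for t i
    using measurable_snd'[OF rvP[OF that, of i]] by simp
  have law: "distr M borel (XS t i) = distr M0 borel (X t)" if t: "t \<in> {1,2}" for t i
  proof -
    have "distr M borel (XS t i) = distr (distr M (borel \<Otimes>\<^sub>M borel) (\<lambda>\<omega>. (YS t i \<omega>, XS t i \<omega>))) borel snd"
      using rvP[OF t, of i] by (subst distr_distr) (auto simp: comp_def)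
    also have "\<dots> = distr (distr M0 (borel \<Otimes>\<^sub>M borel) (\<lambda>\<omega>. (Y t \<omega>, X t \<omega>))) borel snd"
      using A5_law[OF t] by simp
    also have "\<dots> = distr M0 borel (X t)"
      using Y_meas[OF t] X_meas[OF t] by (subst distr_distr) (auto simp: comp_def)
    finally show ?thesis .
  qed
  have t1: "(1::nat) \<in> {1,2}" and t2: "(2::nat) \<in> {1,2}" by auto
  define \<eta>0 where "\<eta>0 = min pl (1 - ph) / 2"
  have e0: "\<eta>0 > 0" "pl - \<eta>0 > 0" "ph + \<eta>0 < 1"
    using p_bounds unfolding \<eta>0_def by (auto simp: min_def field_simps)
  obtain m where m: "m > 0" and sepm: "\<forall>x. pl - \<eta>0 \<le> F 1 x \<longrightarrow> F 1 x \<le> ph + \<eta>0 \<longrightarrow> \<epsilon> \<le> \<bar>x - xstar\<bar> \<longrightarrow> m \<le> \<bar>F 2 x - F 1 x\<bar>"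
  proof -
    have "\<exists>m>0. \<forall>x. pl - \<eta>0 \<le> F 1 x \<longrightarrow> F 1 x \<le> ph + \<eta>0 \<longrightarrow> \<epsilon> \<le> \<bar>x - xstar\<bar> \<longrightarrow> m \<le> \<bar>F 2 x - F 1 x\<bar>"
      by (rule sep_const[OF Fcont[OF t1] Fcont[OF t2] Fmono[OF t1] Fbot[OF t1] Ftop[OF t1] e0(2) e0(3) eps])
         (use A6_unique in \<open>auto simp: F_def\<close>)
    thus ?thesis using that by blast
  qed
  have cross: "F 1 xstar = F 2 xstar" using A6_cross unfolding F_def .
  have Fz: "pl < F 1 xstar" "F 1 xstar < ph" using A6_p unfolding F_def by auto
  define \<eta> where "\<eta> = min (min \<eta>0 ((F 1 xstar - pl)/2)) (min ((ph - F 1 xstar)/2) (m/5))"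
  have eta: "\<eta> > 0" using e0 Fz m unfolding \<eta>_def by auto
  have eta2: "\<eta> / 2 > 0" using eta by simp
  have h1: "\<eta> \<le> (F 1 xstar - pl)/2" unfolding \<eta>_def by (rule min.coboundedI1[OF min.cobounded2])
  have h1': "(F 1 xstar - pl)/2 < F 1 xstar - pl" using Fz by simp
  have eF1: "\<eta> < F 1 xstar - pl" by (rule le_less_trans[OF h1 h1'])
  have h2: "\<eta> \<le> (ph - F 1 xstar)/2" unfolding \<eta>_def by (rule min.coboundedI2[OF min.cobounded1])
  have h2': "(ph - F 1 xstar)/2 < ph - F 1 xstar" using Fz by simp
  have eF2: "\<eta> < ph - F 1 xstar" by (rule le_less_trans[OF h2 h2'])
  obtain P1 where P1: "finite P1" "\<And>G. mono G \<Longrightarrow> (\<forall>x. 0 \<le> G x \<and> G x \<le> 1) \<Longrightarrow>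
      (\<forall>p\<in>P1. \<bar>G p - F 1 p\<bar> \<le> \<eta>/2) \<Longrightarrow> (\<forall>x. \<bar>G x - F 1 x\<bar> \<le> 2*(\<eta>/2))"
    using grid[OF Fcont[OF t1] Fmono[OF t1] Fbnd[OF t1] Fbot[OF t1] Ftop[OF t1] eta2] by blast
  obtain P2 where P2: "finite P2" "\<And>G. mono G \<Longrightarrow> (\<forall>x. 0 \<le> G x \<and> G x \<le> 1) \<Longrightarrow>
      (\<forall>p\<in>P2. \<bar>G p - F 2 p\<bar> \<le> \<eta>/2) \<Longrightarrow> (\<forall>x. \<bar>G x - F 2 x\<bar> \<le> 2*(\<eta>/2))"
    using grid[OF Fcont[OF t2] Fmono[OF t2] Fbnd[OF t2] Fbot[OF t2] Ftop[OF t2] eta2] by blast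
  define Q where "Q = ({1::nat} \<times> P1) \<union> ({2} \<times> P2)"
  have finQ: "finite Q" unfolding Q_def using P1(1) P2(1) by simp
  have Qt: "fst q \<in> {1,2}" if "q \<in> Q" for q using that unfolding Q_def by auto
  define E where "E n q = {\<omega>\<in>space M. \<eta>/2 \<le> \<bar>ecdf (\<lambda>i. XS (fst q) i \<omega>) n (snd q) - F (fst q) (snd q)\<bar>}" for n q
  have Emeas: "E n q \<in> sets M" if "q \<in> Q" for n q
  proof -
    have t: "fst q \<in> {1,2}" by (rule Qt[OF that])
    have [measurable]: "XS (fst q) i \<in> borel_measurable M" for i by (rule rvXS[OF t])
    have [measurable]: "(\<lambda>\<omega>. ecdf (\<lambda>i. XS (fst q) i \<omega>) n (snd q)) \<in> borel_measurable M"
      unfolding ecdf_sum by measurable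
    show ?thesis unfolding E_def by measurable
  qed
  have Ebound: "measure M (E n q) \<le> 2 * exp (-2 * real n * (\<eta>/2)\<^sup>2)" if "q \<in> Q" "n > 0" for n q
  proof -
    have t: "fst q \<in> {1,2}" by (rule Qt[OF that(1)])
    show ?thesis unfolding E_def F_def
      by (rule hoeff_ecdf[OF M A5_indep t law[OF t] that(2)]) (use eta in simp)
  qed
  define C where "C = 2 * real (card Q)"
  define c where "c = 2 * (\<eta>/2)\<^sup>2"
  have c0: "c > 0" unfolding c_def using eta by simp
  define N where "N = nat \<lceil>C / (\<delta> * c)\<rceil> + 1"
  show "\<exists>N. \<forall>n\<ge>N. \<exists>A\<in>sets M.
           {\<omega>\<in>space M. \<epsilon> < \<bar>xhat (\<lambda>i. XS 1 i \<omega>) (\<lambda>i. XS 2 i \<omega>) n pl ph - xstar\<bar>} \<subseteq> A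
           \<and> measure M A < \<delta>"
  proof (intro exI[of _ N] allI impI)
    fix n assume nN: "N \<le> n"
    have n0: "n > 0" using nN unfolding N_def by simp
    have nbig: "C / (\<delta> * c) < real n" using nN unfolding N_def by linarith
    define A where "A = (\<Union>q\<in>Q. E n q)"
    have Asets: "A \<in> sets M" unfolding A_def using finQ Emeas by (intro sets.finite_UN) auto
    have "measure M A \<le> (\<Sum>q\<in>Q. measure M (E n q))"
      unfolding A_def by (rule PM.finite_measure_subadditive_finite[OF finQ]) (use Emeas in auto)
    also have "\<dots> \<le> (\<Sum>q\<in>Q. 2 * exp (-2 * real n * (\<eta>/2)\<^sup>2))"
      by (rule sum_mono) (rule Ebound[OF _ n0])
    also have "\<dots> = C * exp (- (c * real n))" unfolding C_def c_def by simp
    also have "\<dots> < \<delta>"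
    proof -
      have ex: "1 + c * real n \<le> exp (c * real n)" by (rule exp_ge_add_one_self)
      have C0: "C \<ge> 0" unfolding C_def by simp
      have "C * exp (- (c * real n)) = C / exp (c * real n)" by (simp add: exp_minus field_simps)
      also have "\<dots> \<le> C / (1 + c * real n)"
      proof (rule divide_left_mono[OF ex C0])
        have "0 < 1 + c * real n" using c0 by (simp add: add_pos_nonneg)
        thus "0 < exp (c * real n) * (1 + c * real n)" by simp
      qed
      also have "\<dots> < \<delta>"
      proof -
        have "C < \<delta> * c * real n" using nbig del c0 by (simp add: field_simps)
        hence "C < \<delta> * (1 + c * real n)" using del by (simp add: algebra_simps)
        thus ?thesis using c0 by (simp add: field_simps add_pos_nonneg)
      qed
      finally show ?thesis .
    qed
    finally have mA: "measure M A < \<delta>" .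
    have sub: "{\<omega>\<in>space M. \<epsilon> < \<bar>xhat (\<lambda>i. XS 1 i \<omega>) (\<lambda>i. XS 2 i \<omega>) n pl ph - xstar\<bar>} \<subseteq> A"
    proof
      fix \<omega> assume \<omega>: "\<omega> \<in> {\<omega>\<in>space M. \<epsilon> < \<bar>xhat (\<lambda>i. XS 1 i \<omega>) (\<lambda>i. XS 2 i \<omega>) n pl ph - xstar\<bar>}"
      show "\<omega> \<in> A"
      proof (rule ccontr)
        assume nA: "\<omega> \<notin> A"
        have good: "\<bar>ecdf (\<lambda>i. XS t i \<omega>) n p - F t p\<bar> \<le> \<eta>/2" if "(t,p) \<in> Q" for t p
          using nA \<omega> that unfolding A_def E_def by force
        have cl1: "\<bar>ecdf (\<lambda>i. XS 1 i \<omega>) n x - F 1 x\<bar> \<le> \<eta>" for x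
          using P1(2)[OF ecdf_mono allI[OF ecdf_bnd]] good unfolding Q_def by force
        have cl2: "\<bar>ecdf (\<lambda>i. XS 2 i \<omega>) n x - F 2 x\<bar> \<le> \<eta>" for x
          using P2(2)[OF ecdf_mono allI[OF ecdf_bnd]] good unfolding Q_def by force
        have "\<bar>xhat (\<lambda>i. XS 1 i \<omega>) (\<lambda>i. XS 2 i \<omega>) n pl ph - xstar\<bar> < \<epsilon>"
        proof (rule main_det[OF n0 Fcont[OF t1] Fmono[OF t1] cl1 cl2 eF1 eF2 cross p_bounds])
          have b1: "\<eta> \<le> \<eta>0" unfolding \<eta>_def by (rule min.coboundedI1[OF min.cobounded1])
          have "\<eta> \<le> m/5" unfolding \<eta>_def by (rule min.coboundedI2[OF min.cobounded2])
          hence "5 * \<eta> \<le> m" by linarith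
          fix x assume a: "pl - \<eta> \<le> F 1 x" "F 1 x \<le> ph + \<eta>" "\<epsilon> \<le> \<bar>x - xstar\<bar>"
          have "pl - \<eta>0 \<le> F 1 x" "F 1 x \<le> ph + \<eta>0" using a b1 by linarith+
          hence "m \<le> \<bar>F 2 x - F 1 x\<bar>" using sepm a(3) by blast
          thus "4 * \<eta> < \<bar>F 2 x - F 1 x\<bar>" using \<open>5 * \<eta> \<le> m\<close> eta by linarith
        qed
        thus False using \<omega> by simp
      qed
    qed
    show "\<exists>A\<in>sets M. {\<omega>\<in>space M. \<epsilon> < \<bar>xhat (\<lambda>i. XS 1 i \<omega>) (\<lambda>i. XS 2 i \<omega>) n pl ph - xstar\<bar>} \<subseteq> A
           \<and> measure M A < \<delta>"
      using Asets sub mA by blast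
  qed
qed


end
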